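(* Let $\theta,\eta\in\mathbb{R}$, $\gamma,\beta\in\mathbb{R}$. The inequality $\int_0^tu^{-\eta}[h^{-1}(1/u)]^{\gamma}(t-u)^{-\theta}[h^{-1}(1/(t-u))]^{\beta}\,du\le c\,t^{1-\eta-\theta}[h^{-1}(1/t)]^{\gamma+\beta}$ holds: (i) for all $t>0$, whenever $\beta,\gamma\ge0$, $\beta/2+1-\theta>0$ and $\gamma/2+1-\eta>0$, with $c=B(\beta/2+1-\theta,\gamma/2+1-\eta)$; (ii) if $h$ satisfies $h(r)\le C_h\lambda^{\alpha_h}h(\lambda r)$ for all $\lambda\le1$, $r\le1$ (some $\alpha_h\in(0,2]$, $C_h\ge1$), then for every $T>0$, all $t\in(0,T]$ and all $\beta,\gamma\in\mathbb{R}$ with $(\beta/2)\wedge(\beta/\alpha_h)+1-\theta>0$ and $(\gamma/2)\wedge(\gamma/\alpha_h)+1-\eta>0$, with $c=(C_h[h^{-1}(1/T)\vee1]^2)^{-(\beta\wedge0+\gamma\wedge0)/\alpha_h}\,B\big((\beta/2)\wedge(\beta/\alpha_h)+1-\theta,\,(\gamma/2)\wedge(\gamma/\alpha_h)+1-\eta\big)$.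
   Context: Let $d\in\mathbb{N}$ and let $\nu:[0,\infty)\to[0,\infty]$ be non-increasing with $\int_{\mathbb{R}^d}(1\wedge|x|^2)\nu(|x|)\,dx<\infty$. For $r>0$ let $h(r)=\int_{\mathbb{R}^d}\big(1\wedge \tfrac{|x|^2}{r^2}\big)\nu(|x|)\,dx$; assume $h(0^+)=\infty$, so $h$ is a continuous strictly decreasing bijection of $(0,\infty)$ onto $(0,\infty)$ with inverse $h^{-1}$. $B(a,b)=\int_0^1s^{a-1}(1-s)^{b-1}ds$ is the Beta function. *)

theory Defs
  imports "HOL-Analysis.Analysis"
begin

definition h_fun :: "'a::euclidean_space itself \<Rightarrow> (real \<Rightarrow> ennreal) \<Rightarrow> real \<Rightarrow> real" where
  "h_fun _ \<nu> r = enn2real (\<integral>\<^sup>+ x. ennreal (min 1 (norm (x::'a)^2 / r^2)) * \<nu> (norm x) \<partial>lborel)"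

definition h_inv :: "'a::euclidean_space itself \<Rightarrow> (real \<Rightarrow> ennreal) \<Rightarrow> real \<Rightarrow> real" where
  "h_inv T \<nu> y = (THE r. 0 < r \<and> h_fun T \<nu> r = y)"

end

theory Submission
  imports Defs
begin

lemma aux1: fixes Bp u t C A :: real
  assumes "0<Bp" "0<u" "0<t" "0<C" "1/t \<le> C*(A/Bp)*(1/u)" shows "Bp*(u/(C*t)) \<le> A"
proof -
  have "1/t \<le> (C*A) / (Bp*u)" using assms(5) by (simp add: field_simps)
  hence "Bp*u \<le> C*A*t" using assms(1-4) by (simp add: field_simps)
  thus ?thesis using assms(1-4) by (simp add: field_simps)
qed
lemma aux2: fixes u t C A :: real
  assumes "0<u" "0<t" "0<C" "1/t \<le> C*A*(1/u)" shows "u/(C*t) \<le> A"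
proof -
  have "u \<le> C*A*t" using assms by (simp add: field_simps)
  thus ?thesis using assms(1-3) by (simp add: field_simps)
qed

lemma beta_int:
  fixes P Q t :: real
  assumes P: "P > 0" and Q: "Q > 0" and t: "t > 0"
  shows "(\<integral>\<^sup>+ u \<in> {0<..<t}. ennreal (u powr (P - 1) * (t - u) powr (Q - 1)) \<partial>lborel)
         = ennreal (t powr (P + Q - 1) * Beta P Q)"
proof -
  define g where "g s = s powr (P - 1) * (1 - s) powr (Q - 1)" for s :: real
  have gi: "(g has_integral Beta P Q) {0<..<1}"
    using has_integral_Beta_real[OF P Q] unfolding g_def by (simp add: has_integral_Icc_iff_Ioo)
  have B: "(\<integral>\<^sup>+ s. ennreal (g s) * indicator {0<..<1} s \<partial>lborel) = ennreal (Beta P Q)"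
    by (rule nn_integral_has_integral_lebesgue'[OF _ gi]) (simp add: g_def)
  define f where "f u = ennreal (u powr (P - 1) * (t - u) powr (Q - 1)) * indicator {0<..<t} u" for u :: real
  have fm: "f \<in> borel_measurable borel" unfolding f_def by measurable
  have "(\<integral>\<^sup>+ u. f u \<partial>lborel) = ennreal \<bar>t\<bar> * (\<integral>\<^sup>+ x. f (0 + t * x) \<partial>lborel)"
    using nn_integral_real_affine[OF fm, of t 0] t by simp
  also have "(\<lambda>x. f (0 + t * x)) = (\<lambda>x. ennreal (t powr (P + Q - 2)) * (ennreal (g x) * indicator {0<..<1} x))"
  proof
    fix x :: real
    show "f (0 + t * x) = ennreal (t powr (P + Q - 2)) * (ennreal (g x) * indicator {0<..<1} x)"
    proof (cases "x \<in> {0<..<1}")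
      case True
      hence x: "0 < x" "x < 1" by auto
      have in1: "t * x \<in> {0<..<t}" using x t by auto
      have "(t * x) powr (P - 1) * (t - t * x) powr (Q - 1)
            = t powr (P + Q - 2) * g x"
      proof -
        have "t - t * x = t * (1 - x)" by (simp add: algebra_simps)
        hence "(t * x) powr (P - 1) * (t - t * x) powr (Q - 1)
             = (t powr (P - 1) * x powr (P - 1)) * (t powr (Q - 1) * (1 - x) powr (Q - 1))"
          using x t by (simp add: powr_mult)
        also have "\<dots> = (t powr (P - 1) * t powr (Q - 1)) * g x" unfolding g_def by (simp add: ac_simps)
        also have "t powr (P - 1) * t powr (Q - 1) = t powr (P + Q - 2)"
          by (simp add: powr_add[symmetric])
        finally show ?thesis .
      qed
      moreover have "g x \<ge> 0" unfolding g_def by simp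
      ultimately show ?thesis using True in1 t unfolding f_def
        by (simp add: ennreal_mult')
    next
      case False
      hence "t * x \<notin> {0<..<t}" using t by (auto simp: mult_less_cancel_left2 zero_less_mult_iff)
      thus ?thesis using False unfolding f_def by simp
    qed
  qed
  also have "(\<integral>\<^sup>+ x. ennreal (t powr (P + Q - 2)) * (ennreal (g x) * indicator {0<..<1} x) \<partial>lborel)
       = ennreal (t powr (P + Q - 2)) * ennreal (Beta P Q)"
  proof -
    have gm: "(\<lambda>x. ennreal (g x) * indicator {0<..<1} x) \<in> borel_measurable lborel" unfolding g_def by measurable
    show ?thesis by (subst nn_integral_cmult[OF gm]) (simp add: B)
  qed
  also have "ennreal \<bar>t\<bar> * (ennreal (t powr (P + Q - 2)) * ennreal (Beta P Q)) = ennreal (t powr (P + Q - 1) * Beta P Q)"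
  proof -
    have "t powr (P + Q - 1) = t powr (1 + (P + Q - 2))" by simp
    also have "\<dots> = t powr 1 * t powr (P + Q - 2)" by (rule powr_add)
    finally have "t * t powr (P + Q - 2) = t powr (P + Q - 1)" using t by simp
    moreover have "Beta P Q \<ge> 0" using P Q by (simp add: Beta_def Gamma_real_pos less_imp_le)
    ultimately show ?thesis using t by (simp add: ennreal_mult'[symmetric] mult.assoc[symmetric])
  qed
  finally show ?thesis unfolding f_def .
qed


lemma int_bound:
  fixes g :: "real \<Rightarrow> real" and t \<eta> \<theta> \<gamma> \<beta> pg pb Cg Cb Bt :: real
  assumes t: "t > 0" and P: "pg + 1 - \<eta> > 0" and Q: "pb + 1 - \<theta> > 0"
    and Cg: "Cg \<ge> 0" and Cb: "Cb \<ge> 0"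
    and bg: "\<And>u. 0 < u \<Longrightarrow> u < t \<Longrightarrow> g u powr \<gamma> \<le> Cg * Bt powr \<gamma> * (u/t) powr pg"
    and bb: "\<And>u. 0 < u \<Longrightarrow> u < t \<Longrightarrow> g u powr \<beta> \<le> Cb * Bt powr \<beta> * (u/t) powr pb"
  shows "(\<integral>\<^sup>+ u \<in> {0<..<t}. ennreal (u powr (-\<eta>) * g u powr \<gamma> * (t - u) powr (-\<theta>) * g (t - u) powr \<beta>) \<partial>lborel)
      \<le> ennreal (Cg * Cb * Beta (pb + 1 - \<theta>) (pg + 1 - \<eta>) * t powr (1 - \<eta> - \<theta>) * Bt powr (\<gamma> + \<beta>))"
proof -
  define P where "P = pg + 1 - \<eta>"
  define Q where "Q = pb + 1 - \<theta>"
  define C0 where "C0 = Cg * Cb * Bt powr (\<gamma> + \<beta>) * t powr (- (pg + pb))"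
  have C0: "C0 \<ge> 0" unfolding C0_def using Cg Cb by simp
  have pw: "u powr (-\<eta>) * g u powr \<gamma> * (t - u) powr (-\<theta>) * g (t - u) powr \<beta>
        \<le> C0 * (u powr (P - 1) * (t - u) powr (Q - 1))" if u: "0 < u" "u < t" for u
  proof -
    have tu: "0 < t - u" "t - u < t" using u by auto
    have "u powr (-\<eta>) * g u powr \<gamma> * (t - u) powr (-\<theta>) * g (t - u) powr \<beta>
       \<le> u powr (-\<eta>) * (Cg * Bt powr \<gamma> * (u/t) powr pg) * (t - u) powr (-\<theta>) * (Cb * Bt powr \<beta> * ((t-u)/t) powr pb)"
      using bg[OF u] bb[OF tu] Cg Cb
      by (intro mult_mono mult_nonneg_nonneg) auto
    also have "\<dots> = (Cg * Cb * (Bt powr \<gamma> * Bt powr \<beta>) * (t powr (-pg) * t powr (-pb)))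
         * ((u powr (-\<eta>) * u powr pg) * ((t - u) powr (-\<theta>) * (t - u) powr pb))"
    proof -
      have e1: "(u/t) powr pg = u powr pg * t powr (-pg)"
        using u t by (subst powr_divide) (auto simp: powr_minus divide_inverse)
      have e2: "((t-u)/t) powr pb = (t-u) powr pb * t powr (-pb)"
        using u t by (subst powr_divide) (auto simp: powr_minus divide_inverse)
      show ?thesis unfolding e1 e2 by (simp only: ac_simps)
    qed
    also have "\<dots> = C0 * (u powr (P - 1) * (t - u) powr (Q - 1))"
    proof -
      have "P - 1 = -\<eta> + pg" "Q - 1 = -\<theta> + pb" unfolding P_def Q_def by simp_all
      thus ?thesis unfolding C0_def by (simp add: powr_add[symmetric] add.commute)
    qed
    finally show ?thesis .
  qed
  have "(\<integral>\<^sup>+ u \<in> {0<..<t}. ennreal (u powr (-\<eta>) * g u powr \<gamma> * (t - u) powr (-\<theta>) * g (t - u) powr \<beta>) \<partial>lborel)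
      \<le> (\<integral>\<^sup>+ u. ennreal C0 * (ennreal (u powr (P - 1) * (t - u) powr (Q - 1)) * indicator {0<..<t} u) \<partial>lborel)"
  proof (intro nn_integral_mono)
    fix u :: real
    show "ennreal (u powr (-\<eta>) * g u powr \<gamma> * (t - u) powr (-\<theta>) * g (t - u) powr \<beta>) * indicator {0<..<t} u
        \<le> ennreal C0 * (ennreal (u powr (P - 1) * (t - u) powr (Q - 1)) * indicator {0<..<t} u)"
    proof (cases "u \<in> {0<..<t}")
      case True
      hence "ennreal (u powr (-\<eta>) * g u powr \<gamma> * (t - u) powr (-\<theta>) * g (t - u) powr \<beta>)
          \<le> ennreal (C0 * (u powr (P - 1) * (t - u) powr (Q - 1)))"
        using pw by (intro ennreal_leI) auto
      thus ?thesis using True C0 by (simp add: ennreal_mult')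
    qed simp
  qed
  also have "\<dots> = ennreal C0 * (\<integral>\<^sup>+ u \<in> {0<..<t}. ennreal (u powr (P - 1) * (t - u) powr (Q - 1)) \<partial>lborel)"
    by (rule nn_integral_cmult) measurable
  also have "\<dots> = ennreal C0 * ennreal (t powr (P + Q - 1) * Beta P Q)"
    using beta_int[of P Q t] P Q t unfolding P_def Q_def by simp
  also have "\<dots> = ennreal (Cg * Cb * Beta Q P * t powr (1 - \<eta> - \<theta>) * Bt powr (\<gamma> + \<beta>))"
  proof -
    have "t powr (- (pg + pb)) * t powr (P + Q - 1) = t powr (1 - \<eta> - \<theta>)"
      unfolding P_def Q_def by (simp add: powr_add[symmetric] algebra_simps)
    hence "C0 * (t powr (P + Q - 1) * Beta P Q) = Cg * Cb * Beta Q P * t powr (1 - \<eta> - \<theta>) * Bt powr (\<gamma> + \<beta>)"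
      unfolding C0_def by (simp add: Beta_commute ac_simps)
    thus ?thesis using C0 by (simp add: ennreal_mult'[symmetric])
  qed
  finally show ?thesis unfolding P_def Q_def .
qed


locale hs =
  fixes \<nu> :: "real \<Rightarrow> ennreal"
  assumes nu_mono: "\<And>x y. 0 \<le> x \<Longrightarrow> x \<le> y \<Longrightarrow> \<nu> y \<le> \<nu> x"
    and nu_int: "(\<integral>\<^sup>+ x. ennreal (min 1 (norm (x::'a::euclidean_space)^2)) * \<nu> (norm x) \<partial>lborel) < \<infinity>"
    and h0: "filterlim (h_fun TYPE('a) \<nu>) at_top (at_right 0)"
begin

lemma nu_meas[measurable]: "(\<lambda>x::'a. \<nu> (norm x)) \<in> borel_measurable borel"
proof (rule borel_measurableI_greater)
  fix y
  define D where "D = {s. 0 \<le> s \<and> y < \<nu> s}"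
  have "is_interval D"
    unfolding is_interval_1 D_def
    using nu_mono by (auto intro: less_le_trans)
  hence "D \<in> sets borel" by (rule real_interval_borel_measurable)
  hence "norm -` D \<inter> space borel \<in> sets (borel :: 'a measure)"
    by (intro measurable_sets[of norm]) auto
  moreover have "norm -` D \<inter> space borel = {x\<in>space borel. y < \<nu> (norm (x::'a))}"
    by (auto simp: D_def)
  ultimately show "{x\<in>space borel. y < \<nu> (norm (x::'a))} \<in> sets borel" by simp
qed

definition F :: "real \<Rightarrow> 'a \<Rightarrow> ennreal" where
  "F r x = ennreal (min 1 (norm x^2 / r^2)) * \<nu> (norm x)"

lemma F_meas[measurable]: "F r \<in> borel_measurable lborel"
  unfolding F_def by measurable


lemma hh_def: "h_fun TYPE('a) \<nu> r = enn2real (\<integral>\<^sup>+ x. F r x \<partial>lborel)"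
  unfolding h_fun_def F_def by simp

lemma H_fin: assumes "r > 0" shows "(\<integral>\<^sup>+ x. F r x \<partial>lborel) < \<infinity>"
proof -
  define M where "M = max 1 (1/r^2)"
  have M: "M \<ge> 1" unfolding M_def by simp
  have "(\<integral>\<^sup>+ x. F r x \<partial>lborel) \<le> (\<integral>\<^sup>+ x. ennreal M * (ennreal (min 1 (norm (x::'a)^2)) * \<nu> (norm x)) \<partial>lborel)"
  proof (intro nn_integral_mono)
    fix x :: 'a
    have "min 1 (norm x^2 / r^2) \<le> M * min 1 (norm x^2)"
    proof (cases "norm x^2 \<le> 1")
      case True
      have "norm x^2 / r^2 \<le> (1/r^2) * norm x^2" by simp
      also have "\<dots> \<le> M * norm x^2" unfolding M_def by (intro mult_right_mono) auto
      finally show ?thesis using True by auto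
    next
      case False then show ?thesis using M by auto
    qed
    hence "ennreal (min 1 (norm x^2 / r^2)) \<le> ennreal M * ennreal (min 1 (norm x^2))"
      using M by (simp add: ennreal_mult'[symmetric])
    thus "F r x \<le> ennreal M * (ennreal (min 1 (norm x^2)) * \<nu> (norm x))"
      unfolding F_def mult.assoc[symmetric] by (intro mult_right_mono) auto
  qed
  also have "\<dots> = ennreal M * (\<integral>\<^sup>+ x. ennreal (min 1 (norm (x::'a)^2)) * \<nu> (norm x) \<partial>lborel)"
    by (intro nn_integral_cmult) measurable
  also have "\<dots> < \<infinity>" using nu_int by (simp add: ennreal_mult_less_top)
  finally show ?thesis .
qed

lemma hh_eq: "r > 0 \<Longrightarrow> ennreal (h_fun TYPE('a) \<nu> r) = (\<integral>\<^sup>+ x. F r x \<partial>lborel)"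
  unfolding hh_def using H_fin[of r] by (simp add: less_top)

lemma hh_nonneg: "h_fun TYPE('a) \<nu> r \<ge> 0" unfolding hh_def by simp

lemma hh_anti: assumes "0 < s" "s \<le> r" shows "h_fun TYPE('a) \<nu> r \<le> h_fun TYPE('a) \<nu> s"
proof -
  have "(\<integral>\<^sup>+ x. F r x \<partial>lborel) \<le> (\<integral>\<^sup>+ x. F s x \<partial>lborel)"
  proof (intro nn_integral_mono)
    fix x :: 'a
    have "norm x^2 / r^2 \<le> norm x^2 / s^2"
      using assms by (intro divide_left_mono power_mono) auto
    thus "F r x \<le> F s x" unfolding F_def by (intro mult_right_mono) auto
  qed
  thus ?thesis using hh_eq[of r] hh_eq[of s] assms by (simp add: ennreal_le_iff[symmetric] hh_nonneg del: ennreal_le_iff)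
qed

lemma hh_scale: assumes "0 < s" "s \<le> r" shows "s^2 * h_fun TYPE('a) \<nu> s \<le> r^2 * h_fun TYPE('a) \<nu> r"
proof -
  have "(\<integral>\<^sup>+ x. ennreal (s^2) * F s x \<partial>lborel) \<le> (\<integral>\<^sup>+ x. ennreal (r^2) * F r x \<partial>lborel)"
  proof (intro nn_integral_mono)
    fix x :: 'a
    have "s^2 * min 1 (norm x^2 / s^2) = min (s^2) (norm x^2)" using assms
      by (simp add: min_def field_simps)
    moreover have "r^2 * min 1 (norm x^2 / r^2) = min (r^2) (norm x^2)" using assms
      by (simp add: min_def field_simps)
    moreover have "s^2 \<le> r^2" using assms by (intro power_mono) auto
    ultimately have "s^2 * min 1 (norm x^2 / s^2) \<le> r^2 * min 1 (norm x^2 / r^2)" by auto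
    hence "ennreal (s^2) * ennreal (min 1 (norm x^2 / s^2)) \<le> ennreal (r^2) * ennreal (min 1 (norm x^2 / r^2))"
      by (simp add: ennreal_mult'[symmetric])
    thus "ennreal (s^2) * F s x \<le> ennreal (r^2) * F r x"
      unfolding F_def mult.assoc[symmetric] by (intro mult_right_mono) auto
  qed
  hence "ennreal (s^2) * ennreal (h_fun TYPE('a) \<nu> s) \<le> ennreal (r^2) * ennreal (h_fun TYPE('a) \<nu> r)"
    using assms by (simp add: hh_eq nn_integral_cmult)
  thus ?thesis by (simp add: ennreal_mult'[symmetric] hh_nonneg)
qed


lemma small_ball:
  assumes "\<rho> > 0"
  obtains p :: 'a where "\<And>x. x \<in> ball p (\<rho>/4) \<Longrightarrow> \<rho>/4 < norm x \<and> norm x < \<rho>"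
    "emeasure lborel (ball p (\<rho>/4)) > 0"
proof -
  obtain p :: 'a where p: "norm p = \<rho>/2" using vector_choose_size[of "\<rho>/2"] assms by auto
  have 1: "\<rho>/4 < norm x \<and> norm x < \<rho>" if "x \<in> ball p (\<rho>/4)" for x
  proof -
    have d: "norm (p - x) < \<rho>/4" using that by (simp add: dist_norm)
    have "norm p \<le> norm x + norm (p - x)" using norm_triangle_ineq[of x "p - x"] by simp
    moreover have "norm x \<le> norm p + norm (p - x)" using norm_triangle_ineq[of p "x - p"]
      by (simp add: norm_minus_commute)
    ultimately show ?thesis using d p assms by linarith
  qed
  have "emeasure lborel (ball p (\<rho>/4)) = ennreal (measure lborel (ball p (\<rho>/4)))"
    using emeasure_lborel_ball_finite by (intro emeasure_eq_ennreal_measure) (simp add: less_top)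
  moreover have "measure lborel (ball p (\<rho>/4)) > 0" using content_ball_pos[of "\<rho>/4" p] assms by simp
  ultimately have "emeasure lborel (ball p (\<rho>/4)) > 0" by simp
  with 1 that show ?thesis by blast
qed

lemma nu_nonzero: assumes "0 < s" shows "\<exists>\<rho>. 0 < \<rho> \<and> \<rho> < s \<and> 0 < \<nu> \<rho>"
proof (rule ccontr)
  assume "\<not> ?thesis"
  hence z: "\<nu> \<rho> = 0" if "0 < \<rho>" "\<rho> < s" for \<rho> using that by auto
  have z2: "\<nu> \<rho> = 0" if "0 < \<rho>" for \<rho>
  proof (cases "\<rho> < s")
    case True thus ?thesis using z that by auto
  next
    case False
    hence "\<nu> \<rho> \<le> \<nu> (s/2)" using nu_mono[of "s/2" \<rho>] assms by auto
    thus ?thesis using z[of "s/2"] assms by auto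
  qed
  have Fz: "F r x = 0" for r and x :: 'a
    unfolding F_def using z2[of "norm x"] by (cases "x = 0") auto
  have hz: "h_fun TYPE('a) \<nu> r = 0" for r unfolding hh_def Fz by simp
  have "eventually (\<lambda>z. 1 \<le> h_fun TYPE('a) \<nu> z) (at_right 0)"
    using h0 by (simp add: filterlim_at_top)
  then obtain b :: real where "b > 0" "\<And>y. 0 < y \<Longrightarrow> y < b \<Longrightarrow> 1 \<le> h_fun TYPE('a) \<nu> y"
    by (auto simp: eventually_at_right_field)
  from this(2)[of "b/2"] \<open>b > 0\<close> show False by (simp add: hz)
qed

lemma nu_fin: assumes "0 < \<rho>" shows "\<nu> \<rho> < \<infinity>"
proof (rule ccontr)
  assume "\<not> ?thesis"
  hence inf: "\<nu> \<rho> = \<infinity>" by (simp add: less_top[symmetric])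
  obtain p :: 'a where p: "\<And>x. x \<in> ball p (\<rho>/4) \<Longrightarrow> \<rho>/4 < norm x \<and> norm x < \<rho>"
    "emeasure lborel (ball p (\<rho>/4)) > 0" using small_ball[OF assms] by blast
  have "(\<integral>\<^sup>+ x. \<infinity> * indicator (ball p (\<rho>/4)) x \<partial>lborel) \<le>
        (\<integral>\<^sup>+ x. ennreal (min 1 (norm (x::'a)^2)) * \<nu> (norm x) \<partial>lborel)"
  proof (intro nn_integral_mono)
    fix x :: 'a
    show "\<infinity> * indicator (ball p (\<rho>/4)) x \<le> ennreal (min 1 (norm x^2)) * \<nu> (norm x)"
    proof (cases "x \<in> ball p (\<rho>/4)")
      case True
      with p have nx: "\<rho>/4 < norm x" "norm x < \<rho>" by auto
      hence "\<nu> \<rho> \<le> \<nu> (norm x)" using nu_mono[of "norm x" \<rho>] by auto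
      hence ninf: "\<nu> (norm x) = \<infinity>" using inf by (simp add: top_unique)
      have "min 1 (norm x^2) > 0" using nx assms by auto
      hence e: "ennreal (min 1 (norm x^2)) \<noteq> 0" by (metis ennreal_eq_0_iff not_le)
      have "ennreal (min 1 (norm x^2)) * \<nu> (norm x) = \<infinity>"
        unfolding ninf using e by (simp add: ennreal_mult_top del: ennreal_eq_0_iff)
      thus ?thesis by simp
    qed simp
  qed
  also have "\<dots> < \<infinity>" by (rule nu_int)
  finally show False using p(2)
    by (subst (asm) nn_integral_cmult_indicator) (auto simp: ennreal_top_mult split: if_splits)
qed

lemma hh_strict: assumes "0 < s" "s < r" shows "h_fun TYPE('a) \<nu> r < h_fun TYPE('a) \<nu> s"
proof -
  obtain \<rho> where \<rho>: "0 < \<rho>" "\<rho> < s" "0 < \<nu> \<rho>" using nu_nonzero[OF assms(1)] by blast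
  define k where "k = enn2real (\<nu> \<rho>)"
  have k: "ennreal k = \<nu> \<rho>" "k > 0" using nu_fin[OF \<rho>(1)] \<rho>(3) unfolding k_def
    by (auto simp: less_top enn2real_positive_iff)
  obtain p :: 'a where p: "\<And>x. x \<in> ball p (\<rho>/4) \<Longrightarrow> \<rho>/4 < norm x \<and> norm x < \<rho>"
    "emeasure lborel (ball p (\<rho>/4)) > 0" using small_ball[OF \<rho>(1)] by blast
  define B where "B = ball p (\<rho>/4)"
  define c where "c = (\<rho>/4)^2 * (1/s^2 - 1/r^2) * k"
  have sr: "1/r^2 < 1/s^2" using assms by (intro divide_strict_left_mono power_strict_mono) auto
  have c: "c > 0" unfolding c_def using sr k \<rho> by auto
  have pw: "F r x + ennreal c * indicator B x \<le> F s x" for x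
  proof (cases "x \<in> B")
    case True
    with p have nx: "\<rho>/4 < norm x" "norm x < \<rho>" unfolding B_def by auto
    define a where "a = norm x ^ 2"
    have a: "a < s^2" "a < r^2" "(\<rho>/4)^2 \<le> a" unfolding a_def using nx \<rho> assms
      by (auto intro!: power_strict_mono power_mono)
    have m1: "min 1 (a / s^2) = a/s^2" "min 1 (a/r^2) = a/r^2" using a assms by auto
    have nuk: "ennreal k \<le> \<nu> (norm x)" using nu_mono[of "norm x" \<rho>] nx k by auto
    have d: "a/s^2 = a/r^2 + a * (1/s^2 - 1/r^2)" by (simp add: field_simps)
    have cd: "c \<le> a * (1/s^2 - 1/r^2) * k" unfolding c_def using a sr k
      by (intro mult_right_mono) auto
    have "F r x + ennreal c * indicator B x = ennreal (a/r^2) * \<nu> (norm x) + ennreal c"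
      using True unfolding F_def a_def[symmetric] m1 by simp
    also have "\<dots> \<le> ennreal (a/r^2) * \<nu> (norm x) + ennreal (a * (1/s^2 - 1/r^2)) * ennreal k"
    proof (intro add_left_mono)
      have "ennreal c \<le> ennreal (a * (1/s^2 - 1/r^2) * k)" by (rule ennreal_leI[OF cd])
      also have "\<dots> = ennreal (a * (1/s^2 - 1/r^2)) * ennreal k"
        using sr a by (intro ennreal_mult') (auto simp: a_def)
      finally show "ennreal c \<le> ennreal (a * (1/s^2 - 1/r^2)) * ennreal k" .
    qed
    also have "\<dots> \<le> ennreal (a/r^2) * \<nu> (norm x) + ennreal (a * (1/s^2 - 1/r^2)) * \<nu> (norm x)"
      by (intro add_left_mono mult_left_mono nuk) auto
    also have "\<dots> = ennreal (a/s^2) * \<nu> (norm x)"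
    proof -
      have a0: "0 \<le> a" by (simp add: a_def)
      have "ennreal (a/r^2) + ennreal (a * (1/s^2 - 1/r^2)) = ennreal (a/s^2)"
        unfolding d using sr a0 by (subst ennreal_plus[symmetric]) auto
      thus ?thesis by (simp add: distrib_right[symmetric])
    qed
    also have "\<dots> = F s x" unfolding F_def a_def[symmetric] m1 ..
    finally show ?thesis .
  next
    case False
    have "norm x^2 / r^2 \<le> norm x^2 / s^2"
      using assms by (intro divide_left_mono power_mono) auto
    hence "F r x \<le> F s x" unfolding F_def by (intro mult_right_mono) auto
    thus ?thesis using False by simp
  qed
  have "(\<integral>\<^sup>+ x. F r x \<partial>lborel) + ennreal c * emeasure lborel B
        = (\<integral>\<^sup>+ x. F r x + ennreal c * indicator B x \<partial>lborel)"
  proof -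
    have bB[measurable]: "B \<in> sets borel" unfolding B_def by simp
    have m1: "(\<lambda>x. ennreal c * indicator B x) \<in> borel_measurable borel" by measurable
    show ?thesis by (subst nn_integral_add) (auto simp: m1 bB nn_integral_cmult_indicator)
  qed
  also have "\<dots> \<le> (\<integral>\<^sup>+ x. F s x \<partial>lborel)" by (intro nn_integral_mono pw)
  finally have le: "ennreal (h_fun TYPE('a) \<nu> r) + ennreal c * emeasure lborel B \<le> ennreal (h_fun TYPE('a) \<nu> s)"
    using assms by (simp add: hh_eq)
  have pos: "ennreal c * emeasure lborel B > 0" using c p(2) unfolding B_def
    by (simp add: ennreal_zero_less_mult_iff)
  have "ennreal (h_fun TYPE('a) \<nu> r) < ennreal (h_fun TYPE('a) \<nu> r) + ennreal c * emeasure lborel B"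
    using pos by (simp add: ennreal_add_left_cancel_less)
  hence "ennreal (h_fun TYPE('a) \<nu> r) < ennreal (h_fun TYPE('a) \<nu> s)" using le by (rule order.strict_trans2)
  thus ?thesis by (simp add: ennreal_less_iff hh_nonneg)
qed


end

context hs begin

lemma hh_cont: assumes "0 < x" shows "isCont (h_fun TYPE('a) \<nu>) x"
proof -
  let ?h = "h_fun TYPE('a) \<nu>"
  let ?L = "\<lambda>y. ?h x * min 1 ((x/y)^2)" and ?U = "\<lambda>y. ?h x * max 1 ((x/y)^2)"
  have ev: "eventually (\<lambda>y. 0 < y) (at x)"
    using order_tendstoD(1)[OF tendsto_ident_at assms] .
  have b: "?L y \<le> ?h y \<and> ?h y \<le> ?U y" if y: "0 < y" for y
  proof (cases "y \<le> x")
    case True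
    have "(x/y)^2 \<ge> 1" using True y by (simp add: one_le_power)
    moreover have "?h x \<le> ?h y" using hh_anti[OF y True] .
    moreover have "y^2 * ?h y \<le> x^2 * ?h x" using hh_scale[OF y True] .
    hence "?h y \<le> ?h x * (x/y)^2" using y by (simp add: field_simps power_divide)
    ultimately show ?thesis by (simp add: min_def max_def)
  next
    case False
    hence F: "x \<le> y" by simp
    have "(x/y)^2 \<le> 1" using F y assms by (simp add: power_le_one)
    moreover have "?h y \<le> ?h x" using hh_anti[OF assms F] .
    moreover have "x^2 * ?h x \<le> y^2 * ?h y" using hh_scale[OF assms F] .
    hence "?h x * (x/y)^2 \<le> ?h y" using y by (simp add: field_simps power_divide)
    ultimately show ?thesis by (simp add: min_def max_def)
  qed
  have "((\<lambda>y. ?L y) \<longlongrightarrow> ?h x * min 1 ((x/x)^2)) (at x)"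
    using assms by (intro tendsto_intros) auto
  hence L: "(?L \<longlongrightarrow> ?h x) (at x)" using assms by simp
  have "((\<lambda>y. ?U y) \<longlongrightarrow> ?h x * max 1 ((x/x)^2)) (at x)"
    using assms by (intro tendsto_intros) auto
  hence U: "(?U \<longlongrightarrow> ?h x) (at x)" using assms by simp
  have "(?h \<longlongrightarrow> ?h x) (at x)"
    by (rule tendsto_sandwich[OF _ _ L U]) (use ev b in \<open>auto elim: eventually_mono\<close>)
  thus ?thesis by (simp add: isCont_def)
qed

lemma hh_small: assumes "0 < y" shows "\<exists>r>0. h_fun TYPE('a) \<nu> r < y"
proof -
  define f where "f i = F (real (Suc i))" for i
  have dec: "decseq f" unfolding f_def
  proof (intro decseq_SucI le_funI)
    fix i and x :: 'a
    have "norm x^2 / (real (Suc (Suc i)))^2 \<le> norm x^2 / (real (Suc i))^2"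
      by (intro divide_left_mono power_mono) auto
    thus "F (real (Suc (Suc i))) x \<le> F (real (Suc i)) x" unfolding F_def
      by (intro mult_right_mono) auto
  qed
  have fin: "(\<integral>\<^sup>+ x. f i x \<partial>lborel) < \<infinity>" for i unfolding f_def by (rule H_fin) auto
  have inf0: "(INF i. f i x) = 0" for x :: 'a
  proof (cases "x = 0")
    case True thus ?thesis by (simp add: f_def F_def)
  next
    case False
    define a where "a = norm x^2"
    have nf: "\<nu> (norm x) < \<infinity>" using nu_fin False by simp
    have "(\<lambda>i. a * inverse (real (Suc i)) * inverse (real (Suc i))) \<longlonglongrightarrow> a * 0 * 0"
      by (intro tendsto_mult tendsto_const LIMSEQ_inverse_real_of_nat)
    hence "(\<lambda>i. a / (real (Suc i))^2) \<longlonglongrightarrow> 0"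
      by (simp add: power2_eq_square divide_inverse mult.assoc)
    hence "(\<lambda>i. min 1 (a / (real (Suc i))^2)) \<longlonglongrightarrow> min 1 0"
      by (intro tendsto_min tendsto_const)
    hence "(\<lambda>i. ennreal (min 1 (a / (real (Suc i))^2))) \<longlonglongrightarrow> ennreal 0"
      by (intro tendsto_ennrealI) simp
    hence "(\<lambda>i. \<nu> (norm x) * ennreal (min 1 (a / (real (Suc i))^2))) \<longlonglongrightarrow> \<nu> (norm x) * ennreal 0"
      using nf by (intro ennreal_tendsto_cmult) auto
    hence "(\<lambda>i. f i x) \<longlonglongrightarrow> 0" by (simp add: f_def F_def a_def mult.commute)
    moreover have "(\<lambda>i. f i x) \<longlonglongrightarrow> (INF i. f i x)"
    proof (intro LIMSEQ_INF decseq_SucI)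
      fix n show "f (Suc n) x \<le> f n x" using decseq_SucD[OF dec, of n] by (simp add: le_fun_def)
    qed
    ultimately show ?thesis using LIMSEQ_unique by blast
  qed
  have "(INF i. integral\<^sup>N lborel (f i)) = (\<integral>\<^sup>+ x. (INF i. f i x) \<partial>lborel)"
  proof -
    have fm: "f i \<in> borel_measurable lborel" for i unfolding f_def by simp
    show ?thesis by (rule nn_integral_monotone_convergence_INF_decseq[symmetric, OF dec fm fin])
  qed
  also have "\<dots> = 0" by (simp add: inf0)
  finally have "(INF i. integral\<^sup>N lborel (f i)) < ennreal y" using assms by simp
  then obtain i where "integral\<^sup>N lborel (f i) < ennreal y" by (auto simp: INF_less_iff)
  hence "ennreal (h_fun TYPE('a) \<nu> (real (Suc i))) < ennreal y" by (simp add: hh_eq f_def)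
  hence "h_fun TYPE('a) \<nu> (real (Suc i)) < y" using assms by (simp add: ennreal_less_iff hh_nonneg)
  thus ?thesis by (intro exI[of _ "real (Suc i)"]) auto
qed

lemma hinv: assumes "0 < y"
  shows "0 < h_inv TYPE('a) \<nu> y \<and> h_fun TYPE('a) \<nu> (h_inv TYPE('a) \<nu> y) = y"
proof -
  let ?h = "h_fun TYPE('a) \<nu>"
  have "eventually (\<lambda>z. y + 1 \<le> ?h z) (at_right 0)"
    using h0 by (simp add: filterlim_at_top)
  then obtain b :: real where b: "b > 0" "\<And>z. 0 < z \<Longrightarrow> z < b \<Longrightarrow> y + 1 \<le> ?h z"
    by (auto simp: eventually_at_right_field)
  define a where "a = b/2"
  have a: "0 < a" "y \<le> ?h a" using b(1) b(2)[of a] unfolding a_def by auto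
  obtain r where r: "0 < r" "?h r < y" using hh_small[OF assms] by blast
  have ar: "a \<le> r"
  proof (rule ccontr)
    assume "\<not> a \<le> r"
    hence "?h a \<le> ?h r" using hh_anti[OF r(1)] by simp
    thus False using a r by simp
  qed
  have cont: "continuous_on {a..r} ?h"
    using a(1) by (intro continuous_at_imp_continuous_on ballI hh_cont) auto
  have "\<exists>z. a \<le> z \<and> z \<le> r \<and> ?h z = y"
    by (rule IVT2'[OF less_imp_le[OF r(2)] a(2) ar cont])
  then obtain z where z: "a \<le> z" "z \<le> r" "?h z = y" by blast
  have zpos: "0 < z" using z a by simp
  have uniq: "w = z" if "0 < w \<and> ?h w = y" for w
  proof (rule ccontr)
    assume "w \<noteq> z"
    hence "w < z \<or> z < w" by auto
    thus False
    proof
      assume "w < z" thus False using hh_strict[of w z] that z(3) by simp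
    next
      assume "z < w" thus False using hh_strict[of z w] that zpos z(3) by simp
    qed
  qed
  have "h_inv TYPE('a) \<nu> y = z" unfolding h_inv_def
  proof (rule the_equality)
    show "0 < z \<and> ?h z = y" using zpos z(3) by simp
    show "\<And>w. 0 < w \<and> ?h w = y \<Longrightarrow> w = z" by (rule uniq)
  qed
  thus ?thesis using zpos z by simp
qed


lemma hinv_basic:
  assumes u: "0 < u" "u < t"
  shows "0 < h_inv TYPE('a) \<nu> (1/u)" "0 < h_inv TYPE('a) \<nu> (1/t)"
    "h_inv TYPE('a) \<nu> (1/u) \<le> h_inv TYPE('a) \<nu> (1/t)"
    "(h_inv TYPE('a) \<nu> (1/u))^2 \<le> (h_inv TYPE('a) \<nu> (1/t))^2 * (u/t)"
    "h_fun TYPE('a) \<nu> (h_inv TYPE('a) \<nu> (1/u)) = 1/u"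
    "h_fun TYPE('a) \<nu> (h_inv TYPE('a) \<nu> (1/t)) = 1/t"
proof -
  let ?a = "h_inv TYPE('a) \<nu> (1/u)" and ?b = "h_inv TYPE('a) \<nu> (1/t)"
  have t: "0 < t" using u by simp
  have A: "0 < ?a" "h_fun TYPE('a) \<nu> ?a = 1/u" using hinv[of "1/u"] u by auto
  have B: "0 < ?b" "h_fun TYPE('a) \<nu> ?b = 1/t" using hinv[of "1/t"] t by auto
  show "0 < ?a" "0 < ?b" "h_fun TYPE('a) \<nu> ?a = 1/u" "h_fun TYPE('a) \<nu> ?b = 1/t" using A B by auto
  have ut: "1/t < 1/u" using u by (simp add: frac_less2)
  show ab: "?a \<le> ?b"
  proof (rule ccontr)
    assume "\<not> ?a \<le> ?b"
    hence "h_fun TYPE('a) \<nu> ?a \<le> h_fun TYPE('a) \<nu> ?b" using hh_anti[OF B(1)] by simp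
    thus False using A B ut by simp
  qed
  have "?a^2 * (1/u) \<le> ?b^2 * (1/t)" using hh_scale[OF A(1) ab] A B by simp
  hence "?a^2 * (1/u) * u \<le> ?b^2 * (1/t) * u" using u by (intro mult_right_mono) auto
  thus "?a^2 \<le> ?b^2 * (u/t)" using u by (simp add: field_simps)
qed

lemma hinv_mono_T:
  assumes "0 < t" "t \<le> T" shows "h_inv TYPE('a) \<nu> (1/t) \<le> h_inv TYPE('a) \<nu> (1/T)"
proof (cases "t = T")
  case False
  hence "t < T" using assms by simp
  thus ?thesis using hinv_basic(3)[of t T] assms by simp
qed simp

lemma up_bound:
  assumes u: "0 < u" "u < t" and g: "\<gamma> \<ge> 0"
  shows "h_inv TYPE('a) \<nu> (1/u) powr \<gamma> \<le> 1 * h_inv TYPE('a) \<nu> (1/t) powr \<gamma> * (u/t) powr (\<gamma>/2)"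
proof -
  let ?a = "h_inv TYPE('a) \<nu> (1/u)" and ?b = "h_inv TYPE('a) \<nu> (1/t)"
  note hb = hinv_basic[OF u]
  have t: "0 < t" using u by simp
  have "?a powr \<gamma> = (?a powr 2) powr (\<gamma>/2)" by (simp add: powr_powr)
  also have "?a powr 2 = ?a^2" using hb(1) by (simp add: powr_numeral)
  also have "(?a^2) powr (\<gamma>/2) \<le> (?b^2 * (u/t)) powr (\<gamma>/2)"
    using hb(4) g by (intro powr_mono2) auto
  also have "\<dots> = (?b powr 2) powr (\<gamma>/2) * (u/t) powr (\<gamma>/2)"
    using hb(2) u t by (subst powr_mult) (auto simp: powr_numeral)
  also have "(?b powr 2) powr (\<gamma>/2) = ?b powr \<gamma>" by (simp add: powr_powr)
  finally show ?thesis by simp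
qed


lemma low_bound:
  assumes S: "\<forall>lam r. 0 < lam \<longrightarrow> lam \<le> 1 \<longrightarrow> 0 < r \<longrightarrow> r \<le> 1 \<longrightarrow>
          h_fun TYPE('a) \<nu> r \<le> C * lam powr \<alpha> * h_fun TYPE('a) \<nu> (lam * r)"
    and \<alpha>: "0 < \<alpha>" "\<alpha> \<le> 2" and C: "C \<ge> 1"
    and u: "0 < u" "u < t" and tT: "t \<le> T"
  shows "h_inv TYPE('a) \<nu> (1/t) powr \<alpha> * (u / ((C * (max (h_inv TYPE('a) \<nu> (1/T)) 1)^2) * t))
        \<le> h_inv TYPE('a) \<nu> (1/u) powr \<alpha>"
proof -
  let ?h = "h_fun TYPE('a) \<nu>"
  let ?a = "h_inv TYPE('a) \<nu> (1/u)" and ?b = "h_inv TYPE('a) \<nu> (1/t)"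
  define M where "M = max (h_inv TYPE('a) \<nu> (1/T)) 1"
  define K where "K = C * M^2"
  note hb = hinv_basic[OF u]
  have t: "0 < t" using u by simp
  have M1: "M \<ge> 1" unfolding M_def by simp
  have bM: "?b \<le> M" using hinv_mono_T[OF t tT] unfolding M_def by simp
  have K: "K \<ge> C" unfolding K_def using C M1 by (simp add: one_le_power)
  have bpow: "?b powr \<alpha> \<le> M^2"
  proof -
    have "?b powr \<alpha> \<le> M powr \<alpha>" using hb(2) bM \<alpha> by (intro powr_mono2) auto
    also have "\<dots> \<le> M powr 2" using M1 \<alpha> by (intro powr_mono) auto
    finally show ?thesis using M1 by (simp add: powr_numeral)
  qed
  have Ct: "t \<le> C * t" using mult_right_mono[OF C, of t] t by simp
  have "u \<le> C * t" using u Ct by linarith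
  moreover have "0 < C * t" using C t by simp
  ultimately have uCt: "u / (C * t) \<le> 1" by (simp add: pos_divide_le_eq)
  have key: "?b powr \<alpha> * (u / (K * t)) \<le> u / (C * t)"
  proof -
    have "?b powr \<alpha> * (u / (K * t)) \<le> M^2 * (u / (K * t))"
      using bpow u t K C by (intro mult_right_mono) auto
    also have "\<dots> = u / (C * t)" unfolding K_def using M1 C by (simp add: field_simps)
    finally show ?thesis .
  qed
  have "?b powr \<alpha> * (u / (K * t)) \<le> ?a powr \<alpha>"
  proof (cases "?a > 1")
    case True
    hence "1 < ?a powr \<alpha>" using \<alpha> by simp
    thus ?thesis using key uCt by linarith
  next
    case False
    hence a1: "?a \<le> 1" by simp
    show ?thesis
    proof (cases "?b \<le> 1")
      case True
      define lam where "lam = ?a / ?b"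
      have lam: "0 < lam" "lam \<le> 1" unfolding lam_def using hb(1,2,3) by auto
      have "?h ?b \<le> C * lam powr \<alpha> * ?h (lam * ?b)" using S lam hb(2) True by blast
      moreover have "lam * ?b = ?a" unfolding lam_def using hb(2) by simp
      ultimately have "1/t \<le> C * lam powr \<alpha> * (1/u)" using hb(5,6) by simp
      moreover have "lam powr \<alpha> = ?a powr \<alpha> / ?b powr \<alpha>" unfolding lam_def by (rule powr_divide)
      ultimately have "1/t \<le> C * (?a powr \<alpha> / ?b powr \<alpha>) * (1/u)" by simp
      hence "?b powr \<alpha> * (u / (C * t)) \<le> ?a powr \<alpha>"
        by (intro aux1) (use hb(2) u t C in auto)
      moreover have "?b powr \<alpha> * (u / (K * t)) \<le> ?b powr \<alpha> * (u / (C * t))"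
        using K C u t by (intro mult_left_mono divide_left_mono mult_right_mono) auto
      ultimately show ?thesis by linarith
    next
      case False
      have "?h 1 \<le> C * ?a powr \<alpha> * ?h (?a * 1)" using S hb(1) a1 by (meson zero_less_one order_refl)
      hence "?h 1 \<le> C * ?a powr \<alpha> * (1/u)" using hb(5) by simp
      moreover have "?h ?b \<le> ?h 1" using hh_anti[of 1 ?b] False by simp
      ultimately have "1/t \<le> C * ?a powr \<alpha> * (1/u)" using hb(6) by simp
      hence "u / (C * t) \<le> ?a powr \<alpha>" by (intro aux2) (use u t C in auto)
      thus ?thesis using key by linarith
    qed
  qed
  thus ?thesis unfolding K_def M_def .
qed


lemma gen_bound:
  assumes S: "\<forall>lam r. 0 < lam \<longrightarrow> lam \<le> 1 \<longrightarrow> 0 < r \<longrightarrow> r \<le> 1 \<longrightarrow>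
          h_fun TYPE('a) \<nu> r \<le> C * lam powr \<alpha> * h_fun TYPE('a) \<nu> (lam * r)"
    and \<alpha>: "0 < \<alpha>" "\<alpha> \<le> 2" and C: "C \<ge> 1"
    and u: "0 < u" "u < t" and tT: "t \<le> T"
  shows "h_inv TYPE('a) \<nu> (1/u) powr \<gamma> \<le> ((C * (max (h_inv TYPE('a) \<nu> (1/T)) 1)^2) powr (-(min \<gamma> 0)/\<alpha>))
           * h_inv TYPE('a) \<nu> (1/t) powr \<gamma> * (u/t) powr (min (\<gamma>/2) (\<gamma>/\<alpha>))"
proof -
  let ?a = "h_inv TYPE('a) \<nu> (1/u)" and ?b = "h_inv TYPE('a) \<nu> (1/t)"
  define K where "K = C * (max (h_inv TYPE('a) \<nu> (1/T)) 1)^2"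
  note hb = hinv_basic[OF u]
  have t: "0 < t" using u by simp
  have K: "K > 0" unfolding K_def using C by (auto intro!: mult_pos_pos)
  show ?thesis
  proof (cases "\<gamma> \<ge> 0")
    case True
    have m1: "min \<gamma> 0 = 0" using True by simp
    have "\<gamma>/2 \<le> \<gamma>/\<alpha>" using True \<alpha> by (intro divide_left_mono) auto
    hence m2: "min (\<gamma>/2) (\<gamma>/\<alpha>) = \<gamma>/2" by simp
    show ?thesis using up_bound[OF u True] K unfolding K_def[symmetric] m1 m2 by simp
  next
    case False
    have m1: "min \<gamma> 0 = \<gamma>" using False by simp
    have "\<gamma>/\<alpha> \<le> \<gamma>/2" using False \<alpha> by (intro divide_left_mono_neg) auto
    hence m2: "min (\<gamma>/2) (\<gamma>/\<alpha>) = \<gamma>/\<alpha>" by simp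
    have e: "\<gamma>/\<alpha> \<le> 0" using False \<alpha> by (simp add: divide_nonpos_pos)
    have lb: "?b powr \<alpha> * (u / (K * t)) \<le> ?a powr \<alpha>"
      using low_bound[OF S \<alpha> C u tT] unfolding K_def .
    have pos: "0 < ?b powr \<alpha> * (u / (K * t))" using hb(2) u t K by simp
    have "?a powr \<gamma> = (?a powr \<alpha>) powr (\<gamma>/\<alpha>)" using \<alpha> by (simp add: powr_powr)
    also have "\<dots> \<le> (?b powr \<alpha> * (u / (K * t))) powr (\<gamma>/\<alpha>)"
      by (rule powr_mono2'[OF e pos lb])
    also have "\<dots> = (?b powr \<alpha>) powr (\<gamma>/\<alpha>) * ((u/t) / K) powr (\<gamma>/\<alpha>)"
      using u t K by (subst powr_mult) (auto simp: field_simps)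
    also have "(?b powr \<alpha>) powr (\<gamma>/\<alpha>) = ?b powr \<gamma>" using \<alpha> by (simp add: powr_powr)
    also have "((u/t) / K) powr (\<gamma>/\<alpha>) = K powr (-\<gamma>/\<alpha>) * (u/t) powr (\<gamma>/\<alpha>)"
    proof -
      have "-\<gamma>/\<alpha> = -(\<gamma>/\<alpha>)" by simp
      hence k: "K powr (-\<gamma>/\<alpha>) = inverse (K powr (\<gamma>/\<alpha>))" by (simp only: powr_minus)
      show ?thesis unfolding k powr_divide[of "u/t" K] by (simp add: divide_inverse mult.commute)
    qed
    finally show ?thesis unfolding K_def[symmetric] m1 m2 by (simp add: ac_simps)
  qed
qed


end

theorem mainTheorem16:
  fixes \<nu> :: "real \<Rightarrow> ennreal" and \<theta> \<eta> :: real
  assumes nu_mono: "\<And>x y. 0 \<le> x \<Longrightarrow> x \<le> y \<Longrightarrow> \<nu> y \<le> \<nu> x"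
    and nu_int: "(\<integral>\<^sup>+ x. ennreal (min 1 (norm (x::'a::euclidean_space)^2)) * \<nu> (norm x) \<partial>lborel) < \<infinity>"
    and h0: "filterlim (h_fun TYPE('a) \<nu>) at_top (at_right 0)"
  shows
   "(\<forall>t \<beta> \<gamma>. 0 < t \<longrightarrow> \<beta> \<ge> 0 \<longrightarrow> \<gamma> \<ge> 0 \<longrightarrow> \<beta>/2 + 1 - \<theta> > 0 \<longrightarrow> \<gamma>/2 + 1 - \<eta> > 0 \<longrightarrow>
      (\<integral>\<^sup>+ u \<in> {0<..<t}. ennreal (u powr (-\<eta>) * (h_inv TYPE('a) \<nu> (1/u)) powr \<gamma> *
           (t - u) powr (-\<theta>) * (h_inv TYPE('a) \<nu> (1/(t-u))) powr \<beta>) \<partial>lborel)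
      \<le> ennreal (Beta (\<beta>/2 + 1 - \<theta>) (\<gamma>/2 + 1 - \<eta>) *
           t powr (1 - \<eta> - \<theta>) * (h_inv TYPE('a) \<nu> (1/t)) powr (\<gamma> + \<beta>)))
  \<and> (\<forall>\<alpha>\<^sub>h C\<^sub>h. 0 < \<alpha>\<^sub>h \<longrightarrow> \<alpha>\<^sub>h \<le> 2 \<longrightarrow> C\<^sub>h \<ge> 1 \<longrightarrow>
      (\<forall>lam r. 0 < lam \<longrightarrow> lam \<le> 1 \<longrightarrow> 0 < r \<longrightarrow> r \<le> 1 \<longrightarrow>
          h_fun TYPE('a) \<nu> r \<le> C\<^sub>h * lam powr \<alpha>\<^sub>h * h_fun TYPE('a) \<nu> (lam * r)) \<longrightarrow>
      (\<forall>T t \<beta> \<gamma>. 0 < T \<longrightarrow> 0 < t \<longrightarrow> t \<le> T \<longrightarrow>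
         min (\<beta>/2) (\<beta>/\<alpha>\<^sub>h) + 1 - \<theta> > 0 \<longrightarrow> min (\<gamma>/2) (\<gamma>/\<alpha>\<^sub>h) + 1 - \<eta> > 0 \<longrightarrow>
        (\<integral>\<^sup>+ u \<in> {0<..<t}. ennreal (u powr (-\<eta>) * (h_inv TYPE('a) \<nu> (1/u)) powr \<gamma> *
           (t - u) powr (-\<theta>) * (h_inv TYPE('a) \<nu> (1/(t-u))) powr \<beta>) \<partial>lborel)
        \<le> ennreal ((C\<^sub>h * (max (h_inv TYPE('a) \<nu> (1/T)) 1)^2) powr (-(min \<beta> 0 + min \<gamma> 0)/\<alpha>\<^sub>h) *
             Beta (min (\<beta>/2) (\<beta>/\<alpha>\<^sub>h) + 1 - \<theta>) (min (\<gamma>/2) (\<gamma>/\<alpha>\<^sub>h) + 1 - \<eta>) *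
             t powr (1 - \<eta> - \<theta>) * (h_inv TYPE('a) \<nu> (1/t)) powr (\<gamma> + \<beta>))))"
proof -
  interpret hs \<nu> by unfold_locales (use nu_mono nu_int h0 in auto)
  show ?thesis
  proof (intro conjI allI impI)
    fix t \<beta> \<gamma> :: real
    assume t: "0 < t" and b: "\<beta> \<ge> 0" and g: "\<gamma> \<ge> 0" and Q: "\<beta>/2 + 1 - \<theta> > 0" and P: "\<gamma>/2 + 1 - \<eta> > 0"
    have "(\<integral>\<^sup>+ u \<in> {0<..<t}. ennreal (u powr (-\<eta>) * (\<lambda>u. h_inv TYPE('a) \<nu> (1/u)) u powr \<gamma> *
           (t - u) powr (-\<theta>) * (\<lambda>u. h_inv TYPE('a) \<nu> (1/u)) (t - u) powr \<beta>) \<partial>lborel)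
      \<le> ennreal (1 * 1 * Beta (\<beta>/2 + 1 - \<theta>) (\<gamma>/2 + 1 - \<eta>) * t powr (1 - \<eta> - \<theta>) * h_inv TYPE('a) \<nu> (1/t) powr (\<gamma> + \<beta>))"
    proof (rule int_bound[OF t P Q])
      show "\<And>u. 0 < u \<Longrightarrow> u < t \<Longrightarrow> (\<lambda>u. h_inv TYPE('a) \<nu> (1/u)) u powr \<gamma>
          \<le> 1 * h_inv TYPE('a) \<nu> (1/t) powr \<gamma> * (u/t) powr (\<gamma>/2)"
        using up_bound g by simp
      show "\<And>u. 0 < u \<Longrightarrow> u < t \<Longrightarrow> (\<lambda>u. h_inv TYPE('a) \<nu> (1/u)) u powr \<beta>
          \<le> 1 * h_inv TYPE('a) \<nu> (1/t) powr \<beta> * (u/t) powr (\<beta>/2)"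
        using up_bound b by simp
    qed simp_all
    thus "(\<integral>\<^sup>+ u \<in> {0<..<t}. ennreal (u powr (-\<eta>) * (h_inv TYPE('a) \<nu> (1/u)) powr \<gamma> *
           (t - u) powr (-\<theta>) * (h_inv TYPE('a) \<nu> (1/(t-u))) powr \<beta>) \<partial>lborel)
      \<le> ennreal (Beta (\<beta>/2 + 1 - \<theta>) (\<gamma>/2 + 1 - \<eta>) *
           t powr (1 - \<eta> - \<theta>) * (h_inv TYPE('a) \<nu> (1/t)) powr (\<gamma> + \<beta>))" by simp
  next
    fix \<alpha> C :: real
    assume \<alpha>1: "0 < \<alpha>" and \<alpha>2: "\<alpha> \<le> 2" and C: "C \<ge> 1"
      and S: "\<forall>lam r. 0 < lam \<longrightarrow> lam \<le> 1 \<longrightarrow> 0 < r \<longrightarrow> r \<le> 1 \<longrightarrow>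
          h_fun TYPE('a) \<nu> r \<le> C * lam powr \<alpha> * h_fun TYPE('a) \<nu> (lam * r)"
    fix T t \<beta> \<gamma> :: real
    assume T: "0 < T" and t: "0 < t" and tT: "t \<le> T"
      and Q: "min (\<beta>/2) (\<beta>/\<alpha>) + 1 - \<theta> > 0" and P: "min (\<gamma>/2) (\<gamma>/\<alpha>) + 1 - \<eta> > 0"
    define K where "K = C * (max (h_inv TYPE('a) \<nu> (1/T)) 1)^2"
    have K: "K > 0" unfolding K_def using C by (auto intro!: mult_pos_pos)
    have "(\<integral>\<^sup>+ u \<in> {0<..<t}. ennreal (u powr (-\<eta>) * (\<lambda>u. h_inv TYPE('a) \<nu> (1/u)) u powr \<gamma> *
           (t - u) powr (-\<theta>) * (\<lambda>u. h_inv TYPE('a) \<nu> (1/u)) (t - u) powr \<beta>) \<partial>lborel)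
      \<le> ennreal (K powr (-(min \<gamma> 0)/\<alpha>) * K powr (-(min \<beta> 0)/\<alpha>) *
           Beta (min (\<beta>/2) (\<beta>/\<alpha>) + 1 - \<theta>) (min (\<gamma>/2) (\<gamma>/\<alpha>) + 1 - \<eta>) *
           t powr (1 - \<eta> - \<theta>) * h_inv TYPE('a) \<nu> (1/t) powr (\<gamma> + \<beta>))"
    proof (rule int_bound[OF t P Q])
      show "\<And>u. 0 < u \<Longrightarrow> u < t \<Longrightarrow> (\<lambda>u. h_inv TYPE('a) \<nu> (1/u)) u powr \<gamma>
          \<le> K powr (-(min \<gamma> 0)/\<alpha>) * h_inv TYPE('a) \<nu> (1/t) powr \<gamma> * (u/t) powr (min (\<gamma>/2) (\<gamma>/\<alpha>))"
        using gen_bound[OF S \<alpha>1 \<alpha>2 C _ _ tT] unfolding K_def by simp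
      show "\<And>u. 0 < u \<Longrightarrow> u < t \<Longrightarrow> (\<lambda>u. h_inv TYPE('a) \<nu> (1/u)) u powr \<beta>
          \<le> K powr (-(min \<beta> 0)/\<alpha>) * h_inv TYPE('a) \<nu> (1/t) powr \<beta> * (u/t) powr (min (\<beta>/2) (\<beta>/\<alpha>))"
        using gen_bound[OF S \<alpha>1 \<alpha>2 C _ _ tT] unfolding K_def by simp
    qed simp_all
    moreover have "K powr (-(min \<gamma> 0)/\<alpha>) * K powr (-(min \<beta> 0)/\<alpha>) = K powr (-(min \<beta> 0 + min \<gamma> 0)/\<alpha>)"
    proof -
      have "-(min \<beta> 0 + min \<gamma> 0)/\<alpha> = -(min \<gamma> 0)/\<alpha> + -(min \<beta> 0)/\<alpha>" using \<alpha>1 by (simp add: field_simps)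
      hence e: "K powr (-(min \<beta> 0 + min \<gamma> 0)/\<alpha>) = K powr (-(min \<gamma> 0)/\<alpha> + -(min \<beta> 0)/\<alpha>)" by (rule arg_cong)
      show ?thesis unfolding e by (rule powr_add[symmetric])
    qed
    ultimately show "(\<integral>\<^sup>+ u \<in> {0<..<t}. ennreal (u powr (-\<eta>) * (h_inv TYPE('a) \<nu> (1/u)) powr \<gamma> *
           (t - u) powr (-\<theta>) * (h_inv TYPE('a) \<nu> (1/(t-u))) powr \<beta>) \<partial>lborel)
        \<le> ennreal ((C * (max (h_inv TYPE('a) \<nu> (1/T)) 1)^2) powr (-(min \<beta> 0 + min \<gamma> 0)/\<alpha>) *
             Beta (min (\<beta>/2) (\<beta>/\<alpha>) + 1 - \<theta>) (min (\<gamma>/2) (\<gamma>/\<alpha>) + 1 - \<eta>) *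
             t powr (1 - \<eta> - \<theta>) * (h_inv TYPE('a) \<nu> (1/t)) powr (\<gamma> + \<beta>))"
      unfolding K_def[symmetric] by simp
  qed
qed


end
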